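(* Let $k\ge 2$ be an integer and $n\ge 1$, $\ell\ge 0$ integers. Let ${\sf S}_k(n,\ell)$ denote the number of $k$-noncrossing RNA structures on $\{1,\dots,n\}$ with exactly $\ell$ isolated vertices, ${\sf S}_k(n)=\sum_{\ell}{\sf S}_k(n,\ell)$ the total number of $k$-noncrossing RNA structures on $\{1,\dots,n\}$, and $f_k(m,\ell)$ the number of $k$-noncrossing digraphs on $\{1,\dots,m\}$ with exactly $\ell$ isolated vertices (with $f_k(m,\ell)=0$ if $\ell>m$). Then $$ {\sf S}_k(n,\ell)=\sum_{b=0}^{\lfloor (n-\ell)/2\rfloor}(-1)^b\binom{n-b}{b}f_k(n-2b,\ell), $$ and $$ {\sf S}_k(n)=\sum_{b=0}^{\lfloor n/2\rfloor}(-1)^b\binom{n-b}{b}\left\{\sum_{\ell=0}^{n-2b}f_k(n-2b,\ell)\right\}. $$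
   Context: A digraph on $\{1,\dots,n\}$ is a set of arcs $(i,j)$ with $1\le i<j\le n$. It is a $k$-noncrossing digraph if every vertex lies in at most one arc and there are no $k$ arcs $(i_1,j_1),\dots,(i_k,j_k)$ with $i_1<i_2<\dots<i_k<j_1<j_2<\dots<j_k$ (no $k$ mutually crossing arcs). A vertex is isolated if it lies in no arc. A $1$-arc is an arc of the form $(i,i+1)$. A $k$-noncrossing RNA structure is a $k$-noncrossing digraph containing no $1$-arc. Known facts (not part of the claim): $f_k(m,\ell)=\binom{m}{\ell}f_k(m-\ell,0)$, and $\sum_{m\ge 1}f_k(m,0)x^m/m!=\det[I_{i-j}(2x)-I_{i+j}(2x)]_{i,j=1}^{k-1}$, where $I_r(2x)=\sum_{j\ge 0}x^{2r+j}/(j!(r+j)!)$; multiplying by $e^x$ gives the exponential generating function of $\sum_{\ell}f_k(m,\ell)$. *)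

theory Defs
  imports Main
begin

definition is_digraph :: "nat \<Rightarrow> (nat \<times> nat) set \<Rightarrow> bool" where
  "is_digraph n G \<longleftrightarrow> (\<forall>(i,j)\<in>G. 1 \<le> i \<and> i < j \<and> j \<le> n)"

definition lies_in :: "nat \<Rightarrow> nat \<times> nat \<Rightarrow> bool" where
  "lies_in v a \<longleftrightarrow> v = fst a \<or> v = snd a"

definition has_k_crossing :: "nat \<Rightarrow> (nat \<times> nat) set \<Rightarrow> bool" where
  "has_k_crossing k G \<longleftrightarrow>
     (\<exists>i j :: nat \<Rightarrow> nat.
        (\<forall>t<k. (i t, j t) \<in> G) \<and>
        (\<forall>t. Suc t < k \<longrightarrow> i t < i (Suc t) \<and> j t < j (Suc t)) \<and>
        (0 < k \<longrightarrow> i (k - 1) < j 0))"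

definition k_noncrossing_digraph :: "nat \<Rightarrow> nat \<Rightarrow> (nat \<times> nat) set \<Rightarrow> bool" where
  "k_noncrossing_digraph k n G \<longleftrightarrow>
     is_digraph n G \<and>
     (\<forall>v. card {a\<in>G. lies_in v a} \<le> 1) \<and>
     \<not> has_k_crossing k G"

definition isolated_vertices :: "nat \<Rightarrow> (nat \<times> nat) set \<Rightarrow> nat set" where
  "isolated_vertices n G = {v\<in>{1..n}. \<forall>a\<in>G. \<not> lies_in v a}"

definition no_1_arc :: "(nat \<times> nat) set \<Rightarrow> bool" where
  "no_1_arc G \<longleftrightarrow> (\<forall>i. (i, Suc i) \<notin> G)"

definition k_noncrossing_RNA :: "nat \<Rightarrow> nat \<Rightarrow> (nat \<times> nat) set \<Rightarrow> bool" where
  "k_noncrossing_RNA k n G \<longleftrightarrow> k_noncrossing_digraph k n G \<and> no_1_arc G"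

definition f_count :: "nat \<Rightarrow> nat \<Rightarrow> nat \<Rightarrow> nat" where
  "f_count k m l = card {G. k_noncrossing_digraph k m G \<and> card (isolated_vertices m G) = l}"

definition S_count :: "nat \<Rightarrow> nat \<Rightarrow> nat \<Rightarrow> nat" where
  "S_count k n l = card {G. k_noncrossing_RNA k n G \<and> card (isolated_vertices n G) = l}"

definition S_total :: "nat \<Rightarrow> nat \<Rightarrow> nat" where
  "S_total k n = card {G. k_noncrossing_RNA k n G}"

end

theory Submission
  imports Defs
begin


lemma alt_pow:
  assumes "finite A"
  shows "(\<Sum>B\<in>Pow A. (-1::int) ^ card B) = (if A = {} then 1 else 0)"
  using assms
proof (induction A rule: finite_induct)
  case empty then show ?case by simp
next
  case (insert x F)
  have "Pow (insert x F) = Pow F \<union> insert x ` Pow F" by (rule Pow_insert)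
  have d: "Pow F \<inter> insert x ` Pow F = {}" using insert by auto
  have inj: "inj_on (insert x) (Pow F)" using insert unfolding inj_on_def by auto
  have "(\<Sum>B\<in>Pow (insert x F). (-1::int) ^ card B) = (\<Sum>B\<in>Pow F. (-1::int) ^ card B) + (\<Sum>B\<in>insert x ` Pow F. (-1::int) ^ card B)"
    using d insert(1) by (simp add: Pow_insert sum.union_disjoint)
  also have "(\<Sum>B\<in>insert x ` Pow F. (-1::int) ^ card B) = (\<Sum>B\<in>Pow F. (-1::int) ^ card (insert x B))"
    by (simp add: sum.reindex inj)
  also have "\<dots> = (\<Sum>B\<in>Pow F. - ((-1::int) ^ card B))"
    apply (rule sum.cong, simp)
    using insert by (subst card_insert_disjoint) (auto intro: finite_subset)
  finally show ?case by (simp add: sum_negf)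
qed

lemma deg_iff:
  assumes "finite G"
  shows "(\<forall>v. card {a\<in>G. lies_in v a} \<le> 1) \<longleftrightarrow> (\<forall>a\<in>G. \<forall>b\<in>G. \<forall>v. lies_in v a \<and> lies_in v b \<longrightarrow> a = b)"
proof -
  have "\<And>v. card {a\<in>G. lies_in v a} \<le> 1 \<longleftrightarrow> (\<forall>a\<in>{a\<in>G. lies_in v a}. \<forall>b\<in>{a\<in>G. lies_in v a}. a = b)"
    using assms by (simp add: card_le_Suc0_iff_eq)
  then show ?thesis by (metis (mono_tags, lifting) mem_Collect_eq)
qed

lemma strict_bounded:
  assumes "\<forall>t. Suc t < k \<longrightarrow> (f::nat\<Rightarrow>nat) t < f (Suc t)" "s < t" "t < k"
  shows "f s < f t"
  using assms(2,3)
proof (induction t)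
  case 0 then show ?case by simp
next
  case (Suc t)
  have "f t < f (Suc t)" using assms(1) Suc.prems by blast
  moreover have "s = t \<or> f s < f t" using Suc by (metis Suc_lessD less_SucE)
  ultimately show ?case by auto
qed

lemma digraph_fin: "is_digraph n G \<Longrightarrow> G \<subseteq> {1..n} \<times> {1..n}"
  unfolding is_digraph_def by fastforce

lemma finite_digraphs: "finite {G. is_digraph n G}"
  by (rule finite_subset[of _ "Pow ({1..n} \<times> {1..n})"]) (use digraph_fin in blast, simp)

definition psi :: "nat \<Rightarrow> nat \<Rightarrow> nat" where "psi i v = (if v < i then v else v + 2)"
definition phi :: "nat \<Rightarrow> nat \<Rightarrow> nat" where "phi i v = (if v < i then v else v - 2)"
definition psiA :: "nat \<Rightarrow> nat \<times> nat \<Rightarrow> nat \<times> nat" where "psiA i = map_prod (psi i) (psi i)"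
definition phiA :: "nat \<Rightarrow> nat \<times> nat \<Rightarrow> nat \<times> nat" where "phiA i = map_prod (phi i) (phi i)"

lemma psi_less[simp]: "psi i x < psi i y \<longleftrightarrow> x < y" unfolding psi_def by auto
lemma psi_le[simp]: "psi i x \<le> psi i y \<longleftrightarrow> x \<le> y" unfolding psi_def by auto
lemma psi_eq[simp]: "psi i x = psi i y \<longleftrightarrow> x = y" unfolding psi_def by auto
lemma psi_ne1[simp]: "psi i x \<noteq> i" unfolding psi_def by auto
lemma psi_ne2[simp]: "psi i x \<noteq> Suc i" unfolding psi_def by auto
lemma phi_psi[simp]: "phi i (psi i v) = v" unfolding psi_def phi_def by auto
lemma psi_phi: "u \<noteq> i \<Longrightarrow> u \<noteq> Suc i \<Longrightarrow> psi i (phi i u) = u" unfolding psi_def phi_def by auto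
lemma phiA_psiA[simp]: "phiA i (psiA i x) = x" unfolding psiA_def phiA_def by (cases x) auto
lemma inj_psiA: "inj (psiA i)" by (metis injI phiA_psiA)
lemma psiA_ne[simp]: "psiA i x \<noteq> (i, Suc i)" unfolding psiA_def by (cases x) auto
lemma lies_psiA: "lies_in v (psiA i x) \<longleftrightarrow> (\<exists>w. v = psi i w \<and> lies_in w x)"
  unfolding psiA_def lies_in_def by (cases x) auto
lemma lies_psiA2[simp]: "lies_in (psi i w) (psiA i x) \<longleftrightarrow> lies_in w x"
  unfolding psiA_def lies_in_def by (cases x) auto

lemma digraph_equiv:
  assumes "1 \<le> i" "Suc i \<le> n"
  shows "is_digraph n (psiA i ` H \<union> {(i, Suc i)}) \<longleftrightarrow> is_digraph (n - 2) H"
proof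
  assume a: "is_digraph n (psiA i ` H \<union> {(i, Suc i)})"
  show "is_digraph (n - 2) H" unfolding is_digraph_def
  proof (clarify)
    fix x y assume "(x, y) \<in> H"
    then have "(psi i x, psi i y) \<in> psiA i ` H \<union> {(i, Suc i)}" unfolding psiA_def by force
    then have "1 \<le> psi i x" "psi i x < psi i y" "psi i y \<le> n" using a unfolding is_digraph_def by blast+
    then show "1 \<le> x \<and> x < y \<and> y \<le> n - 2" using assms unfolding psi_def by (auto split: if_splits)
  qed
next
  assume a: "is_digraph (n - 2) H"
  show "is_digraph n (psiA i ` H \<union> {(i, Suc i)})" unfolding is_digraph_def
  proof (clarify)
    fix x y assume "(x, y) \<in> psiA i ` H \<union> {(i, Suc i)}"
    then consider "(x,y) = (i, Suc i)" | u w where "(u,w) \<in> H" "x = psi i u" "y = psi i w"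
      unfolding psiA_def by auto
    then show "1 \<le> x \<and> x < y \<and> y \<le> n"
    proof cases
      case 1 then show ?thesis using assms by auto
    next
      case 2
      then have "1 \<le> u" "u < w" "w \<le> n - 2" using a unfolding is_digraph_def by blast+
      then show ?thesis using 2 assms unfolding psi_def by auto
    qed
  qed
qed

definition disj :: "(nat \<times> nat) set \<Rightarrow> bool" where
  "disj G \<longleftrightarrow> (\<forall>a\<in>G. \<forall>b\<in>G. \<forall>v. lies_in v a \<and> lies_in v b \<longrightarrow> a = b)"

lemma disj_equiv: "disj (psiA i ` H \<union> {(i, Suc i)}) \<longleftrightarrow> disj H"
proof
  assume a: "disj (psiA i ` H \<union> {(i, Suc i)})"
  show "disj H" unfolding disj_def
  proof (intro ballI allI impI)
    fix x y v assume "x \<in> H" "y \<in> H" "lies_in v x \<and> lies_in v y"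
    then have "psiA i x = psiA i y" using a unfolding disj_def
      by (metis UnI1 image_eqI lies_psiA2)
    then show "x = y" by (metis phiA_psiA)
  qed
next
  assume a: "disj H"
  show "disj (psiA i ` H \<union> {(i, Suc i)})" unfolding disj_def
  proof (intro ballI allI impI)
    fix x y v assume x: "x \<in> psiA i ` H \<union> {(i, Suc i)}" and y: "y \<in> psiA i ` H \<union> {(i, Suc i)}"
      and l: "lies_in v x \<and> lies_in v y"
    show "x = y"
    proof (cases "x = (i, Suc i) \<or> y = (i, Suc i)")
      case True
      then have "v = i \<or> v = Suc i" using l unfolding lies_in_def by auto
      moreover have "x \<noteq> (i, Suc i) \<Longrightarrow> \<exists>w. v = psi i w" using x l lies_psiA by blast
      moreover have "y \<noteq> (i, Suc i) \<Longrightarrow> \<exists>w. v = psi i w" using y l lies_psiA by blast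
      ultimately show ?thesis using True by (metis psi_ne1 psi_ne2)
    next
      case False
      then obtain x' y' where "x' \<in> H" "y' \<in> H" "x = psiA i x'" "y = psiA i y'" using x y by auto
      moreover from l obtain w where "v = psi i w" "lies_in w x'" using lies_psiA \<open>x = psiA i x'\<close> by blast
      ultimately show ?thesis using a l unfolding disj_def by auto
    qed
  qed
qed

lemma cross_equiv:
  assumes k: "2 \<le> k"
  shows "has_k_crossing k (psiA i ` H \<union> {(i, Suc i)}) \<longleftrightarrow> has_k_crossing k H"
proof
  assume "has_k_crossing k (psiA i ` H \<union> {(i, Suc i)})"
  then obtain I J where A: "\<forall>t<k. (I t, J t) \<in> psiA i ` H \<union> {(i, Suc i)}"
    and M: "\<forall>t. Suc t < k \<longrightarrow> I t < I (Suc t) \<and> J t < J (Suc t)"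
    and C: "0 < k \<longrightarrow> I (k - 1) < J 0" unfolding has_k_crossing_def by blast
  have MI: "\<forall>t. Suc t < k \<longrightarrow> I t < I (Suc t)" and MJ: "\<forall>t. Suc t < k \<longrightarrow> J t < J (Suc t)" using M by auto
  have ne: "(I t, J t) \<noteq> (i, Suc i)" if t: "t < k" for t
  proof
    assume e: "(I t, J t) = (i, Suc i)"
    show False
    proof (cases "t < k - 1")
      case True
      have "I t < I (k - 1)" using strict_bounded[OF MI True] k by auto
      moreover have "J 0 \<le> J t" using strict_bounded[OF MJ, of 0 t] t by (cases t) auto
      ultimately show False using e C k by auto
    next
      case False
      then have "0 < t" "t = k - 1" using t k by auto
      then have "J 0 < J t" using strict_bounded[OF MJ, of 0 t] t by auto
      then show False using e C k \<open>t = k - 1\<close> by auto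
    qed
  qed
  have inH: "phiA i (I t, J t) \<in> H \<and> (I t, J t) = psiA i (phiA i (I t, J t))" if "t < k" for t
    using A ne that by fastforce
  have pI: "I t = psi i (phi i (I t))" "J t = psi i (phi i (J t))" if "t < k" for t
    using inH[OF that] unfolding psiA_def phiA_def by auto
  have c1: "\<forall>t<k. (phi i (I t), phi i (J t)) \<in> H" using inH unfolding phiA_def by auto
  have c2: "\<forall>t. Suc t < k \<longrightarrow> phi i (I t) < phi i (I (Suc t)) \<and> phi i (J t) < phi i (J (Suc t))"
  proof (intro allI impI)
    fix t assume t: "Suc t < k"
    then have "psi i (phi i (I t)) < psi i (phi i (I (Suc t)))" "psi i (phi i (J t)) < psi i (phi i (J (Suc t)))"
      using pI[of t] pI[of "Suc t"] M by auto
    then show "phi i (I t) < phi i (I (Suc t)) \<and> phi i (J t) < phi i (J (Suc t))" by auto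
  qed
  have c3: "0 < k \<longrightarrow> phi i (I (k - 1)) < phi i (J 0)"
  proof
    assume "0 < k"
    then have "psi i (phi i (I (k - 1))) < psi i (phi i (J 0))" using pI[of "k - 1"] pI[of 0] C by auto
    then show "phi i (I (k - 1)) < phi i (J 0)" by auto
  qed
  show "has_k_crossing k H" unfolding has_k_crossing_def
    apply (rule exI[of _ "\<lambda>t. phi i (I t)"], rule exI[of _ "\<lambda>t. phi i (J t)"])
    using c1 c2 c3 by simp
next
  assume "has_k_crossing k H"
  then obtain I J where A: "\<forall>t<k. (I t, J t) \<in> H"
    and M: "\<forall>t. Suc t < k \<longrightarrow> I t < I (Suc t) \<and> J t < J (Suc t)"
    and C: "0 < k \<longrightarrow> I (k - 1) < J 0" unfolding has_k_crossing_def by blast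
  have c1: "\<forall>t<k. (psi i (I t), psi i (J t)) \<in> psiA i ` H \<union> {(i, Suc i)}"
    using A unfolding psiA_def by force
  show "has_k_crossing k (psiA i ` H \<union> {(i, Suc i)})" unfolding has_k_crossing_def
    apply (rule exI[of _ "\<lambda>t. psi i (I t)"], rule exI[of _ "\<lambda>t. psi i (J t)"])
    using c1 M C by simp
qed

lemma iso_equiv:
  assumes "1 \<le> i" "Suc i \<le> n"
  shows "isolated_vertices n (psiA i ` H \<union> {(i, Suc i)}) = psi i ` isolated_vertices (n - 2) H"
proof (intro set_eqI iffI)
  fix u assume u: "u \<in> isolated_vertices n (psiA i ` H \<union> {(i, Suc i)})"
  then have u1: "u \<in> {1..n}" "u \<noteq> i" "u \<noteq> Suc i" and u2: "\<forall>a\<in>H. \<not> lies_in u (psiA i a)"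
    unfolding isolated_vertices_def lies_in_def by auto
  have "phi i u \<in> isolated_vertices (n - 2) H" unfolding isolated_vertices_def
  proof (intro CollectI conjI ballI)
    show "phi i u \<in> {1..n - 2}" using u1 assms unfolding phi_def by auto
  next
    fix a assume "a \<in> H" then show "\<not> lies_in (phi i u) a" using u2 psi_phi[OF u1(2,3)] lies_psiA2 by metis
  qed
  then show "u \<in> psi i ` isolated_vertices (n - 2) H" using psi_phi[OF u1(2,3)] by (metis image_eqI)
next
  fix u assume "u \<in> psi i ` isolated_vertices (n - 2) H"
  then obtain w where w: "u = psi i w" "w \<in> {1..n-2}" "\<forall>a\<in>H. \<not> lies_in w a"
    unfolding isolated_vertices_def by auto
  show "u \<in> isolated_vertices n (psiA i ` H \<union> {(i, Suc i)})" unfolding isolated_vertices_def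
  proof (intro CollectI conjI ballI)
    show "u \<in> {1..n}" using w assms unfolding psi_def by auto
  next
    fix a assume "a \<in> psiA i ` H \<union> {(i, Suc i)}"
    then consider "a = (i, Suc i)" | b where "b \<in> H" "a = psiA i b" by auto
    then show "\<not> lies_in u a"
    proof cases
      case 1 then show ?thesis using w unfolding lies_in_def by (metis fst_conv snd_conv psi_ne1 psi_ne2)
    next
      case 2 then show ?thesis using w lies_psiA2 by metis
    qed
  qed
qed

definition DG :: "nat \<Rightarrow> nat \<Rightarrow> nat \<Rightarrow> (nat \<times> nat) set set" where
  "DG k n l = {G. k_noncrossing_digraph k n G \<and> card (isolated_vertices n G) = l}"

lemma kdg_disj: "k_noncrossing_digraph k n G \<longleftrightarrow> is_digraph n G \<and> disj G \<and> \<not> has_k_crossing k G"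
proof (cases "is_digraph n G")
  case True then have "finite G" using finite_subset[OF digraph_fin] by blast
  then show ?thesis unfolding k_noncrossing_digraph_def disj_def using deg_iff True by simp
next
  case False then show ?thesis unfolding k_noncrossing_digraph_def by simp
qed

lemma main_equiv:
  assumes "2 \<le> k" "1 \<le> i" "Suc i \<le> n"
  shows "psiA i ` H \<union> {(i, Suc i)} \<in> DG k n l \<longleftrightarrow> H \<in> DG k (n - 2) l"
proof -
  have "card (isolated_vertices n (psiA i ` H \<union> {(i, Suc i)})) = card (isolated_vertices (n - 2) H)"
    unfolding iso_equiv[OF assms(2,3)] by (rule card_image) (simp add: inj_on_def)
  then show ?thesis unfolding DG_def kdg_disj
    using digraph_equiv[OF assms(2,3)] disj_equiv cross_equiv[OF assms(1)] by auto
qed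

lemma surj_form:
  assumes "disj G" "(i, Suc i) \<in> G"
  shows "G = psiA i ` (phiA i ` (G - {(i, Suc i)})) \<union> {(i, Suc i)}"
proof -
  have "psiA i (phiA i x) = x" if "x \<in> G - {(i, Suc i)}" for x
  proof -
    have l: "lies_in i (i, Suc i)" "lies_in (Suc i) (i, Suc i)" by (auto simp: lies_in_def)
    have "\<not> lies_in i x" "\<not> lies_in (Suc i) x" using assms that l unfolding disj_def by (metis DiffE singletonI)+
    then show ?thesis unfolding psiA_def phiA_def lies_in_def by (cases x) (auto simp: psi_phi)
  qed
  then have "psiA i ` (phiA i ` (G - {(i, Suc i)})) = G - {(i, Suc i)}"
    by (simp add: image_image)
  then show ?thesis using assms by auto
qed

lemma contain_equiv:
  assumes "\<forall>x\<in>B. fst x < i \<and> snd x < i"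
  shows "B \<subseteq> psiA i ` H \<union> {(i, Suc i)} \<longleftrightarrow> B \<subseteq> H"
proof -
  have fix1: "psiA i x = x" if "x \<in> B" for x
    using assms that unfolding psiA_def psi_def by (cases x) auto
  show ?thesis
  proof
    assume a: "B \<subseteq> psiA i ` H \<union> {(i, Suc i)}"
    show "B \<subseteq> H"
    proof
      fix x assume x: "x \<in> B"
      then have "x \<noteq> (i, Suc i)" using assms by auto
      then obtain y where "y \<in> H" "x = psiA i y" using a x by auto
      then have "y = x" using fix1[OF x] by (metis phiA_psiA)
      then show "x \<in> H" using \<open>y \<in> H\<close> by simp
    qed
  next
    assume "B \<subseteq> H" then show "B \<subseteq> psiA i ` H \<union> {(i, Suc i)}" using fix1 by force
  qed
qed




definition OA :: "nat \<Rightarrow> (nat \<times> nat) set" where "OA n = {(c, Suc c) | c. 1 \<le> c \<and> Suc c \<le> n}"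
definition validB :: "nat \<Rightarrow> (nat \<times> nat) set \<Rightarrow> bool" where
  "validB n B \<longleftrightarrow> B \<subseteq> OA n \<and> (\<forall>c. (c, Suc c) \<in> B \<longrightarrow> (Suc c, Suc (Suc c)) \<notin> B)"

lemma OA_sub: "OA n \<subseteq> {1..n} \<times> {1..n}" unfolding OA_def by auto
lemma finite_OA[simp]: "finite (OA n)" using OA_sub by (rule finite_subset) simp

lemma count_contain:
  assumes k: "2 \<le> k"
  shows "validB n B \<Longrightarrow> card B = b \<Longrightarrow> card {G \<in> DG k n l. B \<subseteq> G} = f_count k (n - 2*b) l"
proof (induction b arbitrary: n B)
  case 0
  then have "B = {}" using finite_subset[OF _ finite_OA] unfolding validB_def by auto
  then show ?case unfolding f_count_def DG_def by simp
next
  case (Suc b)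
  have finB: "finite B" using Suc.prems finite_subset[OF _ finite_OA] unfolding validB_def by auto
  then have "B \<noteq> {}" using Suc.prems by auto
  define i where "i = Max (fst ` B)"
  have "i \<in> fst ` B" unfolding i_def using finB \<open>B \<noteq> {}\<close> by (intro Max_in) auto
  then obtain x where x: "x \<in> B" "fst x = i" by auto
  then obtain c where "x = (c, Suc c)" "1 \<le> c" "Suc c \<le> n" using Suc.prems unfolding validB_def OA_def by auto
  then have a0: "(i, Suc i) \<in> B" and i1: "1 \<le> i" and i2: "Suc i \<le> n" using x by auto
  define B' where "B' = B - {(i, Suc i)}"
  have B'lt: "fst y < i \<and> snd y < i" if "y \<in> B'" for y
  proof -
    from that have yB: "y \<in> B" "y \<noteq> (i, Suc i)" unfolding B'_def by auto
    then obtain c where c: "y = (c, Suc c)" using Suc.prems unfolding validB_def OA_def by auto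
    have "c \<in> fst ` B" using yB c by force
    then have "c \<le> i" unfolding i_def using finB by simp
    moreover have "c \<noteq> i" using yB c by auto
    moreover have "Suc c \<noteq> i" using yB c a0 Suc.prems unfolding validB_def by auto
    ultimately show ?thesis using c by auto
  qed
  have vB': "validB (n - 2) B'"
  proof -
    have "B' \<subseteq> OA (n - 2)"
    proof
      fix y assume y: "y \<in> B'"
      then obtain c where "y = (c, Suc c)" "1 \<le> c" using Suc.prems unfolding validB_def OA_def B'_def by auto
      then show "y \<in> OA (n - 2)" using B'lt[OF y] i2 unfolding OA_def by auto
    qed
    then show ?thesis using Suc.prems unfolding validB_def B'_def by auto
  qed
  have cB': "card B' = b" using Suc.prems a0 finB unfolding B'_def by simp
  have B'lt2: "\<forall>y\<in>B'. fst y < i \<and> snd y < i" using B'lt by blast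
  define F where "F H = psiA i ` H \<union> {(i, Suc i)}" for H
  have Fm: "F H \<in> DG k n l \<longleftrightarrow> H \<in> DG k (n - 2) l" for H
    unfolding F_def by (rule main_equiv[OF k i1 i2])
  have Fc: "B' \<subseteq> F H \<longleftrightarrow> B' \<subseteq> H" for H
    unfolding F_def by (rule contain_equiv[OF B'lt2])
  have Bins: "B = insert (i, Suc i) B'" using a0 unfolding B'_def by auto
  have eq: "{G \<in> DG k n l. B \<subseteq> G} = F ` {H \<in> DG k (n - 2) l. B' \<subseteq> H}"
  proof (intro set_eqI iffI)
    fix G assume G: "G \<in> {G \<in> DG k n l. B \<subseteq> G}"
    then have G1: "G \<in> DG k n l" "B \<subseteq> G" by auto
    then have "disj G" unfolding DG_def kdg_disj by auto
    moreover have "(i, Suc i) \<in> G" using G1 a0 by auto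
    ultimately have GF0: "G = F (phiA i ` (G - {(i, Suc i)}))" unfolding F_def by (rule surj_form)
    define H0 where "H0 = phiA i ` (G - {(i, Suc i)})"
    have GF: "G = F H0" using GF0 unfolding H0_def .
    have "F H0 \<in> DG k n l" using G1(1) GF by simp
    then have "H0 \<in> DG k (n - 2) l" using Fm by blast
    moreover have "B' \<subseteq> G" using G1(2) Bins by auto
    then have "B' \<subseteq> F H0" using GF by simp
    then have "B' \<subseteq> H0" using Fc by blast
    ultimately show "G \<in> F ` {H \<in> DG k (n - 2) l. B' \<subseteq> H}" using GF by blast
  next
    fix G assume "G \<in> F ` {H \<in> DG k (n - 2) l. B' \<subseteq> H}"
    then obtain H where H: "H \<in> DG k (n - 2) l" "B' \<subseteq> H" "G = F H" by auto
    then have "G \<in> DG k n l" using Fm by simp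
    moreover have "B' \<subseteq> G" using H Fc by simp
    moreover have "(i, Suc i) \<in> G" using H(3) unfolding F_def by simp
    ultimately show "G \<in> {G \<in> DG k n l. B \<subseteq> G}" using Bins by simp
  qed
  have inj: "inj_on F X" for X
  proof (rule inj_onI)
    fix H1 H2 assume e: "F H1 = F H2"
    have "psiA i ` H = F H - {(i, Suc i)}" for H unfolding F_def by (auto, metis psiA_ne)
    then have "psiA i ` H1 = psiA i ` H2" using e by simp
    then show "H1 = H2" using inj_psiA by (simp add: inj_image_eq_iff)
  qed
  have "card {G \<in> DG k n l. B \<subseteq> G} = card {H \<in> DG k (n - 2) l. B' \<subseteq> H}"
    unfolding eq by (rule card_image[OF inj])
  also have "\<dots> = f_count k (n - 2 - 2 * b) l" using Suc.IH[OF vB' cB'] .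
  also have "n - 2 - 2 * b = n - 2 * Suc b" by simp
  finally show ?case .
qed




lemma validB_fin: "validB n B \<Longrightarrow> finite B"
  unfolding validB_def using finite_subset finite_OA by blast

lemma OA_small: "n \<le> 1 \<Longrightarrow> OA n = {}" unfolding OA_def by auto

lemma OA_mono: "m \<le> n \<Longrightarrow> OA m \<subseteq> OA n" unfolding OA_def by auto

lemma split1: "(validB (Suc (Suc m)) B \<and> (Suc m, Suc (Suc m)) \<notin> B) \<longleftrightarrow> validB (Suc m) B"
proof
  assume a: "validB (Suc (Suc m)) B \<and> (Suc m, Suc (Suc m)) \<notin> B"
  have "B \<subseteq> OA (Suc m)"
  proof
    fix x assume x: "x \<in> B"
    then obtain c where "x = (c, Suc c)" "1 \<le> c" "Suc c \<le> Suc (Suc m)" using a unfolding validB_def OA_def by auto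
    moreover have "c \<noteq> Suc m" using a x calculation by auto
    ultimately show "x \<in> OA (Suc m)" unfolding OA_def by auto
  qed
  then show "validB (Suc m) B" using a unfolding validB_def by auto
next
  assume a: "validB (Suc m) B"
  then have "(Suc m, Suc (Suc m)) \<notin> B" unfolding validB_def OA_def by auto
  moreover have "OA (Suc m) \<subseteq> OA (Suc (Suc m))" by (rule OA_mono) simp
  ultimately show "validB (Suc (Suc m)) B \<and> (Suc m, Suc (Suc m)) \<notin> B" using a unfolding validB_def by auto
qed

lemma split2:
  assumes "a = (Suc m, Suc (Suc m))"
  shows "(validB (Suc (Suc m)) B \<and> a \<in> B) \<longleftrightarrow> (validB m (B - {a}) \<and> a \<in> B)"
proof
  assume h: "validB (Suc (Suc m)) B \<and> a \<in> B"
  have "B - {a} \<subseteq> OA m"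
  proof
    fix x assume x: "x \<in> B - {a}"
    then obtain c where c: "x = (c, Suc c)" "1 \<le> c" "Suc c \<le> Suc (Suc m)" using h unfolding validB_def OA_def by auto
    have "c \<noteq> Suc m" using x c assms by auto
    moreover have "c \<noteq> m" using x c h assms unfolding validB_def by auto
    ultimately show "x \<in> OA m" using c unfolding OA_def by auto
  qed
  then show "validB m (B - {a}) \<and> a \<in> B" using h unfolding validB_def by auto
next
  assume h: "validB m (B - {a}) \<and> a \<in> B"
  have "B \<subseteq> OA (Suc (Suc m))"
  proof
    fix x assume "x \<in> B"
    moreover have "a \<in> OA (Suc (Suc m))" using assms unfolding OA_def by auto
    moreover have "OA m \<subseteq> OA (Suc (Suc m))" by (rule OA_mono) simp
    ultimately show "x \<in> OA (Suc (Suc m))" using h unfolding validB_def by blast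
  qed
  moreover have "(Suc c, Suc (Suc c)) \<notin> B" if "(c, Suc c) \<in> B" for c
  proof (cases "(c, Suc c) = a")
    case True
    then have "(Suc c, Suc (Suc c)) \<notin> OA m" "(Suc c, Suc (Suc c)) \<noteq> a" using assms unfolding OA_def by auto
    then show ?thesis using h unfolding validB_def by auto
  next
    case False
    then have in1: "(c, Suc c) \<in> OA m" using h that unfolding validB_def by auto
    then have "(Suc c, Suc (Suc c)) \<noteq> a" using assms unfolding OA_def by auto
    then show ?thesis using h that False unfolding validB_def by auto
  qed
  ultimately show "validB (Suc (Suc m)) B \<and> a \<in> B" using h unfolding validB_def by auto
qed

lemma count0: "{B. validB n B \<and> card B = 0} = {{}}"
  using validB_fin unfolding validB_def by auto

lemma count_small: "n \<le> 1 \<Longrightarrow> {B. validB n B \<and> card B = Suc b} = {}"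
  using OA_small unfolding validB_def by auto

lemma count_valid: "card {B. validB n B \<and> card B = b} = (n - b) choose b"
proof (induction n arbitrary: b rule: less_induct)
  case (less n)
  show ?case
  proof (cases b)
    case 0 then show ?thesis by (simp add: count0)
  next
    case (Suc b')
    show ?thesis
    proof (cases "n \<le> 1")
      case True then show ?thesis unfolding Suc count_small[OF True] by (simp add: binomial_eq_0)
    next
      case False
      define m where "m = n - 2"
      have n: "n = Suc (Suc m)" using False unfolding m_def by simp
      define a where "a = (Suc m, Suc (Suc m))"
      have eq: "{B. validB n B \<and> card B = b} =
        {B. validB (Suc m) B \<and> card B = b} \<union> insert a ` {B. validB m B \<and> card B = b'}"
      proof (intro set_eqI iffI)
        fix B assume B: "B \<in> {B. validB n B \<and> card B = b}"
        show "B \<in> {B. validB (Suc m) B \<and> card B = b} \<union> insert a ` {B. validB m B \<and> card B = b'}"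
        proof (cases "a \<in> B")
          case True
          then have v: "validB m (B - {a})" using split2[OF a_def] B n by auto
          have "card (B - {a}) = b'" using B True Suc validB_fin by auto
          moreover have "B = insert a (B - {a})" using True by auto
          ultimately show ?thesis using v by blast
        next
          case False then show ?thesis using split1 B n a_def by auto
        qed
      next
        fix B assume B: "B \<in> {B. validB (Suc m) B \<and> card B = b} \<union> insert a ` {B. validB m B \<and> card B = b'}"
        show "B \<in> {B. validB n B \<and> card B = b}"
        proof (cases "B \<in> {B. validB (Suc m) B \<and> card B = b}")
          case True then show ?thesis using split1 n by auto
        next
          case False
          then obtain B' where B': "validB m B'" "card B' = b'" "B = insert a B'" using B by auto
          have "a \<notin> B'" using B' a_def unfolding validB_def OA_def by auto
          then have "B - {a} = B'" "card B = b" using B' Suc validB_fin by auto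
          then show ?thesis using split2[OF a_def, of B] B' n by auto
        qed
      qed
      have disj: "{B. validB (Suc m) B \<and> card B = b} \<inter> insert a ` {B. validB m B \<and> card B = b'} = {}"
      proof -
        have "a \<notin> OA (Suc m)" using a_def unfolding OA_def by auto
        then show ?thesis unfolding validB_def by auto
      qed
      have inj: "inj_on (insert a) {B. validB m B \<and> card B = b'}"
      proof (rule inj_onI)
        fix X Y assume "X \<in> {B. validB m B \<and> card B = b'}" "Y \<in> {B. validB m B \<and> card B = b'}" "insert a X = insert a Y"
        moreover have "a \<notin> X" "a \<notin> Y" using calculation a_def unfolding validB_def OA_def by auto
        ultimately show "X = Y" by (metis insert_ident)
      qed
      have fin: "finite {B. validB k B}" for k
        by (rule finite_subset[of _ "Pow (OA k)"]) (auto simp: validB_def)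
      have "card {B. validB n B \<and> card B = b} = card {B. validB (Suc m) B \<and> card B = b} + card {B. validB m B \<and> card B = b'}"
        unfolding eq
        by (subst card_Un_disjoint) (auto simp: disj card_image[OF inj] intro: finite_subset[OF _ fin])
      also have "\<dots> = ((Suc m - b) choose b) + ((m - b') choose b')" using less n by simp
      also have "\<dots> = (n - b) choose b"
      proof (cases "b' \<le> m")
        case True
        then have "Suc m - b' = Suc (m - b')" by simp
        then show ?thesis using Suc n by simp
      next
        case False then show ?thesis using Suc n by (simp add: binomial_eq_0)
      qed
      finally show ?thesis .
    qed
  qed
qed




lemma fin_DG: "finite (DG k n l)"
  by (rule finite_subset[OF _ finite_digraphs[of n]]) (auto simp: DG_def k_noncrossing_digraph_def)

lemma fin_V: "finite {B. validB n B}"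
  by (rule finite_subset[of _ "Pow (OA n)"]) (auto simp: validB_def)

lemma card_OA: "card (OA n) \<le> n"
proof -
  have "OA n \<subseteq> (\<lambda>c. (c, Suc c)) ` {1..n}" unfolding OA_def by auto
  then have "card (OA n) \<le> card ((\<lambda>c. (c, Suc c)) ` {1..n})" by (rule card_mono[OF finite_imageI[OF finite_atLeastAtMost]])
  also have "\<dots> \<le> n" using card_image_le[of "{1..n}" "\<lambda>c. (c, Suc c)"] by simp
  finally show ?thesis .
qed

lemma iso_le: "card (isolated_vertices m G) \<le> m"
proof -
  have "card (isolated_vertices m G) \<le> card {1..m}"
    by (rule card_mono) (auto simp: isolated_vertices_def)
  then show ?thesis by simp
qed

lemma f_zero: "m < l \<Longrightarrow> f_count k m l = 0"
  unfolding f_count_def using iso_le[of m] by (metis (mono_tags, lifting) card.empty empty_Collect_eq not_le)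

lemma RNA_iff: "(k_noncrossing_RNA k n G \<and> card (isolated_vertices n G) = l) \<longleftrightarrow> (G \<in> DG k n l \<and> G \<inter> OA n = {})"
proof -
  have "no_1_arc G \<longleftrightarrow> G \<inter> OA n = {}" if "is_digraph n G"
    using that unfolding no_1_arc_def OA_def is_digraph_def by fastforce
  then show ?thesis unfolding k_noncrossing_RNA_def DG_def k_noncrossing_digraph_def by auto
qed

lemma general_formula:
  assumes k: "2 \<le> k"
  shows "int (S_count k n l) = (\<Sum>b=0..n. (-1) ^ b * int ((n - b) choose b) * int (f_count k (n - 2*b) l))"
proof -
  let ?D = "DG k n l"
  have "S_count k n l = card {G \<in> ?D. G \<inter> OA n = {}}"
    unfolding S_count_def using RNA_iff by (metis (no_types, lifting))
  then have "int (S_count k n l) = (\<Sum>G\<in>?D. if G \<inter> OA n = {} then 1 else 0)"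
    using fin_DG by (simp add: sum.If_cases) (metis Collect_conj_eq Collect_mem_eq)
  also have "\<dots> = (\<Sum>G\<in>?D. \<Sum>B\<in>{B \<in> Pow (OA n). B \<subseteq> G}. (-1::int) ^ card B)"
  proof (rule sum.cong[OF refl])
    fix G assume "G \<in> ?D"
    have "Pow (G \<inter> OA n) = {B \<in> Pow (OA n). B \<subseteq> G}" by auto
    then show "(if G \<inter> OA n = {} then 1 else 0) = (\<Sum>B\<in>{B \<in> Pow (OA n). B \<subseteq> G}. (-1::int) ^ card B)"
      using alt_pow[of "G \<inter> OA n"] by simp
  qed
  also have "\<dots> = (\<Sum>B\<in>Pow (OA n). \<Sum>G\<in>{G \<in> ?D. B \<subseteq> G}. (-1::int) ^ card B)"
    using sum.swap_restrict[OF fin_DG, of "Pow (OA n)" "\<lambda>G B. (-1::int) ^ card B" "\<lambda>G B. B \<subseteq> G"] by simp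
  also have "\<dots> = (\<Sum>B\<in>Pow (OA n). (-1::int) ^ card B * int (card {G \<in> ?D. B \<subseteq> G}))"
    by (simp add: mult.commute)
  also have "\<dots> = (\<Sum>B\<in>{B. validB n B}. (-1::int) ^ card B * int (card {G \<in> ?D. B \<subseteq> G}))"
  proof (rule sum.mono_neutral_right)
    show "finite (Pow (OA n))" by simp
    show "{B. validB n B} \<subseteq> Pow (OA n)" by (auto simp: validB_def)
    show "\<forall>B\<in>Pow (OA n) - {B. validB n B}. (-1::int) ^ card B * int (card {G \<in> ?D. B \<subseteq> G}) = 0"
    proof
      fix B assume B: "B \<in> Pow (OA n) - {B. validB n B}"
      then obtain c where c: "(c, Suc c) \<in> B" "(Suc c, Suc (Suc c)) \<in> B" unfolding validB_def by auto
      have "{G \<in> ?D. B \<subseteq> G} = {}"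
      proof (rule ccontr)
        assume "{G \<in> ?D. B \<subseteq> G} \<noteq> {}"
        then obtain G where G: "G \<in> ?D" "B \<subseteq> G" by auto
        then have "disj G" unfolding DG_def kdg_disj by auto
        moreover have "lies_in (Suc c) (c, Suc c)" "lies_in (Suc c) (Suc c, Suc (Suc c))" unfolding lies_in_def by auto
        ultimately have "(c, Suc c) = (Suc c, Suc (Suc c))" using c G(2) unfolding disj_def by blast
        then show False by simp
      qed
      then have "card {G \<in> ?D. B \<subseteq> G} = 0" by (metis card.empty)
      then show "(-1::int) ^ card B * int (card {G \<in> ?D. B \<subseteq> G}) = 0" by simp
    qed
  qed
  also have "\<dots> = (\<Sum>B\<in>{B. validB n B}. (-1::int) ^ card B * int (f_count k (n - 2 * card B) l))"
    by (rule sum.cong[OF refl]) (simp add: count_contain[OF k])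
  also have "\<dots> = (\<Sum>b\<in>{0..n}. \<Sum>B\<in>{B. validB n B \<and> card B = b}. (-1::int) ^ card B * int (f_count k (n - 2 * card B) l))"
  proof -
    have "card ` {B. validB n B} \<subseteq> {0..n}"
    proof
      fix x assume "x \<in> card ` {B. validB n B}"
      then obtain B where "validB n B" "x = card B" by auto
      then have "x \<le> card (OA n)" unfolding validB_def by (simp add: card_mono)
      then show "x \<in> {0..n}" using card_OA[of n] by simp
    qed
    note g = sum.group[OF fin_V finite_atLeastAtMost this, of "\<lambda>B. (-1::int) ^ card B * int (f_count k (n - 2 * card B) l)"]
    show ?thesis using g[symmetric] by (simp only: mem_Collect_eq)
  qed
  also have "\<dots> = (\<Sum>b=0..n. (-1) ^ b * int ((n - b) choose b) * int (f_count k (n - 2*b) l))"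
  proof (rule sum.cong[OF refl])
    fix b
    have "(\<Sum>B\<in>{B. validB n B \<and> card B = b}. (-1::int) ^ card B * int (f_count k (n - 2 * card B) l))
        = (\<Sum>B\<in>{B. validB n B \<and> card B = b}. (-1::int) ^ b * int (f_count k (n - 2 * b) l))"
      by (rule sum.cong) auto
    also have "\<dots> = (-1) ^ b * int ((n - b) choose b) * int (f_count k (n - 2*b) l)"
      by (simp add: count_valid)
    finally show "(\<Sum>B\<in>{B. validB n B \<and> card B = b}. (-1::int) ^ card B * int (f_count k (n - 2 * card B) l))
        = (-1) ^ b * int ((n - b) choose b) * int (f_count k (n - 2*b) l)" .
  qed
  finally show ?thesis .
qed




lemma part1:
  assumes k: "2 \<le> k"
  shows "int (S_count k n l) =
           (\<Sum>b=0..(n - l) div 2. (-1) ^ b * int ((n - b) choose b) * int (f_count k (n - 2*b) l))"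
proof -
  have "(\<Sum>b=0..(n - l) div 2. (-1) ^ b * int ((n - b) choose b) * int (f_count k (n - 2*b) l))
      = (\<Sum>b=0..n. (-1) ^ b * int ((n - b) choose b) * int (f_count k (n - 2*b) l))"
  proof (rule sum.mono_neutral_left)
    show "finite {0..n}" by simp
    show "{0..(n - l) div 2} \<subseteq> {0..n}" by auto
    show "\<forall>b\<in>{0..n} - {0..(n - l) div 2}. (-1) ^ b * int ((n - b) choose b) * int (f_count k (n - 2*b) l) = 0"
    proof
      fix b assume b: "b \<in> {0..n} - {0..(n - l) div 2}"
      show "(-1) ^ b * int ((n - b) choose b) * int (f_count k (n - 2*b) l) = 0"
      proof (cases "n < 2 * b")
        case True then have "(n - b) choose b = 0" by (simp add: binomial_eq_0)
        then show ?thesis by simp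
      next
        case False
        from b have "(n - l) div 2 < b" by auto
        then have "n - 2 * b < l" using False by linarith
        then show ?thesis by (simp add: f_zero)
      qed
    qed
  qed
  then show ?thesis using general_formula[OF k] by simp
qed

lemma part2:
  assumes k: "2 \<le> k"
  shows "int (S_total k n) =
           (\<Sum>b=0..n div 2. (-1) ^ b * int ((n - b) choose b) *
              (\<Sum>l'=0..n - 2*b. int (f_count k (n - 2*b) l')))"
proof -
  let ?A = "{G. k_noncrossing_RNA k n G}"
  have finA: "finite ?A"
    by (rule finite_subset[OF _ finite_digraphs[of n]]) (auto simp: k_noncrossing_RNA_def k_noncrossing_digraph_def)
  have sub: "(\<lambda>G. card (isolated_vertices n G)) ` ?A \<subseteq> {0..n}" using iso_le by auto
  have "S_total k n = (\<Sum>G\<in>?A. 1)" unfolding S_total_def by simp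
  also have "\<dots> = (\<Sum>l'\<in>{0..n}. \<Sum>G\<in>{x. x \<in> ?A \<and> card (isolated_vertices n x) = l'}. 1)"
    using sum.group[OF finA finite_atLeastAtMost sub, of "\<lambda>_. 1::nat"] by simp
  also have "\<dots> = (\<Sum>l'\<in>{0..n}. S_count k n l')" unfolding S_count_def by simp
  finally have "int (S_total k n) = (\<Sum>l'=0..n. int (S_count k n l'))" by simp
  also have "\<dots> = (\<Sum>l'=0..n. \<Sum>b=0..n. (-1) ^ b * int ((n - b) choose b) * int (f_count k (n - 2*b) l'))"
    using general_formula[OF k] by simp
  also have "\<dots> = (\<Sum>b=0..n. \<Sum>l'=0..n. (-1) ^ b * int ((n - b) choose b) * int (f_count k (n - 2*b) l'))"
    by (rule sum.swap)
  also have "\<dots> = (\<Sum>b=0..n. (-1) ^ b * int ((n - b) choose b) * (\<Sum>l'=0..n. int (f_count k (n - 2*b) l')))"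
    by (simp add: sum_distrib_left)
  also have "\<dots> = (\<Sum>b=0..n. (-1) ^ b * int ((n - b) choose b) * (\<Sum>l'=0..n - 2*b. int (f_count k (n - 2*b) l')))"
  proof (rule sum.cong[OF refl])
    fix b
    have "(\<Sum>l'=0..n - 2*b. int (f_count k (n - 2*b) l')) = (\<Sum>l'=0..n. int (f_count k (n - 2*b) l'))"
      by (rule sum.mono_neutral_left) (auto simp: f_zero)
    then show "(-1) ^ b * int ((n - b) choose b) * (\<Sum>l'=0..n. int (f_count k (n - 2*b) l'))
        = (-1) ^ b * int ((n - b) choose b) * (\<Sum>l'=0..n - 2*b. int (f_count k (n - 2*b) l'))" by simp
  qed
  also have "\<dots> = (\<Sum>b=0..n div 2. (-1) ^ b * int ((n - b) choose b) * (\<Sum>l'=0..n - 2*b. int (f_count k (n - 2*b) l')))"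
  proof (rule sum.mono_neutral_right)
    show "finite {0..n}" by simp
    show "{0..n div 2} \<subseteq> {0..n}" by auto
    show "\<forall>b\<in>{0..n} - {0..n div 2}. (-1) ^ b * int ((n - b) choose b) * (\<Sum>l'=0..n - 2*b. int (f_count k (n - 2*b) l')) = 0"
    proof
      fix b assume "b \<in> {0..n} - {0..n div 2}"
      then have "n - b < b" by auto
      then have "(n - b) choose b = 0" by (simp add: binomial_eq_0)
      then show "(-1) ^ b * int ((n - b) choose b) * (\<Sum>l'=0..n - 2*b. int (f_count k (n - 2*b) l')) = 0" by simp
    qed
  qed
  finally show ?thesis .
qed

theorem theorem3p1:
  fixes k n l :: nat
  assumes "k \<ge> 2" and "n \<ge> 1"
  shows "int (S_count k n l) =
           (\<Sum>b=0..(n - l) div 2. (-1) ^ b * int ((n - b) choose b) * int (f_count k (n - 2*b) l))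
         \<and> int (S_total k n) =
           (\<Sum>b=0..n div 2. (-1) ^ b * int ((n - b) choose b) *
              (\<Sum>l'=0..n - 2*b. int (f_count k (n - 2*b) l')))"
  using part1[OF assms(1)] part2[OF assms(1)] by blast


end
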